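(* In the two-period setting of the context, assume $\frac{\hat\ell_n^P}{E_n}+\frac12\ge\frac{\hat\ell^P}{E}$ for all $n$. For $\alpha\in[0,1]$ let $\mathrm{SC}^{\mathrm{DP}}_\alpha$ denote the social cost $\sum_{n}f_n^\alpha(\boldsymbol\ell)$ evaluated at a Nash equilibrium $\boldsymbol\ell$ of $\mathcal G^{\mathrm{DP}}_\alpha$. Then $\mathrm{SC}^{\mathrm{DP}}_\alpha=(1-\alpha)\big[\frac{E^2}{2}+\frac{D^2}{2}(\alpha^2+V_E(1-\alpha)\alpha)\big]$ with $D=\hat\ell^P-\hat\ell^O$ and $V_E=\sum_n E_n^2/E^2$, and $\alpha\mapsto\mathrm{SC}^{\mathrm{DP}}_\alpha$ is a decreasing function of $\alpha$ on $[0,1]$.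
   Context: Two-period setting: users $\mathcal N=\{1,\dots,N\}$, periods $\mathcal H=\{P,O\}$. Each user $n$ has energy demand $E_n>0$ and preferred profile $(\hat\ell_n^P,\hat\ell_n^O)$ with $\hat\ell_n^h\ge0$, $\hat\ell_n^P+\hat\ell_n^O=E_n$; $E=\sum_nE_n$, $\hat\ell^h=\sum_n\hat\ell_n^h$, and $\hat\ell^P\ge\frac E2\ge\hat\ell^O$. Feasible set $\mathcal L_n=\{(\ell_n^P,\ell_n^O):\ell_n^P+\ell_n^O=E_n,\ \ell_n^P,\ell_n^O\ge0\}$, $\ell^h=\sum_n\ell_n^h$. Costs $C_h(x)=x^2$, utilities $u_n(\boldsymbol\ell_n)=-\sum_h(\ell_n^h-\hat\ell_n^h)^2$. DP bill $b_n^{\mathrm{DP}}=\frac{E_n}{E}((\ell^P)^2+(\ell^O)^2)$. In $\mathcal G^{\mathrm{DP}}_\alpha$ user $n$ minimizes $f_n^\alpha=(1-\alpha)b_n^{\mathrm{DP}}-\alpha u_n(\boldsymbol\ell_n)$ over $\mathcal L_n$. (For $\alpha\in(0,1]$ the equilibrium is unique; for $\alpha=0$ all equilibria have the same social cost $E^2/2$.) *)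

theory Defs
  imports Complex_Main
begin

text \<open>Users are indexed by {1..N}. A load profile assigns to each user n a pair
  (l_n^P, l_n^O) (peak, off-peak). Values outside {1..N} are irrelevant.\<close>

definition totE :: "nat \<Rightarrow> (nat \<Rightarrow> real) \<Rightarrow> real" where
  "totE N E = (\<Sum>n\<in>{1..N}. E n)"

definition totP :: "nat \<Rightarrow> (nat \<Rightarrow> real \<times> real) \<Rightarrow> real" where
  "totP N l = (\<Sum>n\<in>{1..N}. fst (l n))"

definition totO :: "nat \<Rightarrow> (nat \<Rightarrow> real \<times> real) \<Rightarrow> real" where
  "totO N l = (\<Sum>n\<in>{1..N}. snd (l n))"

definition feasible :: "(nat \<Rightarrow> real) \<Rightarrow> nat \<Rightarrow> (real \<times> real) set" where
  "feasible E n = {(p, q). p + q = E n \<and> p \<ge> 0 \<and> q \<ge> 0}"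

text \<open>DP bill with costs C_h(x) = x^2.\<close>
definition bill_DP :: "nat \<Rightarrow> (nat \<Rightarrow> real) \<Rightarrow> (nat \<Rightarrow> real \<times> real) \<Rightarrow> nat \<Rightarrow> real" where
  "bill_DP N E l n = E n / totE N E * ((totP N l)^2 + (totO N l)^2)"

definition util :: "(nat \<Rightarrow> real \<times> real) \<Rightarrow> (nat \<Rightarrow> real \<times> real) \<Rightarrow> nat \<Rightarrow> real" where
  "util lhat l n = - ((fst (l n) - fst (lhat n))^2 + (snd (l n) - snd (lhat n))^2)"

definition f_alpha :: "real \<Rightarrow> nat \<Rightarrow> (nat \<Rightarrow> real) \<Rightarrow> (nat \<Rightarrow> real \<times> real)
    \<Rightarrow> (nat \<Rightarrow> real \<times> real) \<Rightarrow> nat \<Rightarrow> real" where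
  "f_alpha \<alpha> N E lhat l n = (1 - \<alpha>) * bill_DP N E l n - \<alpha> * util lhat l n"

definition nash_DP :: "real \<Rightarrow> nat \<Rightarrow> (nat \<Rightarrow> real) \<Rightarrow> (nat \<Rightarrow> real \<times> real)
    \<Rightarrow> (nat \<Rightarrow> real \<times> real) \<Rightarrow> bool" where
  "nash_DP \<alpha> N E lhat l \<longleftrightarrow>
     (\<forall>n\<in>{1..N}. l n \<in> feasible E n) \<and>
     (\<forall>n\<in>{1..N}. \<forall>x\<in>feasible E n. f_alpha \<alpha> N E lhat l n \<le> f_alpha \<alpha> N E lhat (l(n := x)) n)"

definition SC_DP :: "real \<Rightarrow> nat \<Rightarrow> (nat \<Rightarrow> real) \<Rightarrow> (nat \<Rightarrow> real \<times> real)
    \<Rightarrow> (nat \<Rightarrow> real \<times> real) \<Rightarrow> real" where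
  "SC_DP \<alpha> N E lhat l = (\<Sum>n\<in>{1..N}. f_alpha \<alpha> N E lhat l n)"

end

theory Submission imports Defs begin

lemma totP_upd: assumes "n \<in> {1..N}" shows "totP N (l(n:=x)) = totP N l - fst (l n) + fst x"
proof -
  have "totP N (l(n:=x)) = fst x + (\<Sum>m\<in>{1..N}-{n}. fst ((l(n:=x)) m))"
    unfolding totP_def using assms by (simp add: sum.remove)
  also have "(\<Sum>m\<in>{1..N}-{n}. fst ((l(n:=x)) m)) = (\<Sum>m\<in>{1..N}-{n}. fst (l m))"
    by (rule sum.cong) auto
  also have "\<dots> = totP N l - fst (l n)" unfolding totP_def using assms by (simp add: sum.remove)
  finally show ?thesis by linarith
qed

lemma totO_upd: assumes "n \<in> {1..N}" shows "totO N (l(n:=x)) = totO N l - snd (l n) + snd x"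
proof -
  have "totO N (l(n:=x)) = snd x + (\<Sum>m\<in>{1..N}-{n}. snd ((l(n:=x)) m))"
    unfolding totO_def using assms by (simp add: sum.remove)
  also have "(\<Sum>m\<in>{1..N}-{n}. snd ((l(n:=x)) m)) = (\<Sum>m\<in>{1..N}-{n}. snd (l m))"
    by (rule sum.cong) auto
  also have "\<dots> = totO N l - snd (l n)" unfolding totO_def using assms by (simp add: sum.remove)
  finally show ?thesis by linarith
qed

lemma negG:
  fixes u En G K :: real
  assumes K: "K > 0" and u: "u > 0" "u \<le> En"
    and H: "\<forall>h. 0 \<le> u+h \<and> u+h \<le> En \<longrightarrow> 0 \<le> h*G + h^2*K"
  shows "G \<le> 0"
proof (rule ccontr)
  assume "\<not> G \<le> 0"
  hence G: "G > 0" by simp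
  define t where "t = min u (G/(2*K))"
  have t0: "t > 0" using G K u by (simp add: t_def)
  have tu: "t \<le> u" by (simp add: t_def)
  have tK: "t*K \<le> G/2" proof -
    have "t \<le> G/(2*K)" by (simp add: t_def)
    thus ?thesis using K by (simp add: pos_le_divide_eq mult_ac)
  qed
  have "0 \<le> (-t)*G + (-t)^2*K" using H[rule_format, of "-t"] tu t0 u by simp
  moreover have "(-t)*G + (-t)^2*K = t*(t*K - G)" by (simp add: power2_eq_square algebra_simps)
  moreover have "t*(t*K - G) < 0" using t0 tK G by (simp add: mult_pos_neg)
  ultimately show False by simp
qed

lemma posG:
  fixes u En G K :: real
  assumes K: "K > 0" and u: "u \<ge> 0" "u < En"
    and H: "\<forall>h. 0 \<le> u+h \<and> u+h \<le> En \<longrightarrow> 0 \<le> h*G + h^2*K"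
  shows "G \<ge> 0"
proof (rule ccontr)
  assume "\<not> G \<ge> 0"
  hence G: "G < 0" by simp
  define t where "t = min (En - u) (-G/(2*K))"
  have "G/(2*K) < 0" using G K by (simp add: divide_neg_pos)
  hence "-G/(2*K) > 0" by simp
  hence t0: "t > 0" using u by (simp add: t_def)
  have tu: "t \<le> En - u" by (simp add: t_def)
  have tK: "t*K \<le> -G/2" proof -
    have "t \<le> -G/(2*K)" by (simp add: t_def)
    hence "t*(2*K) \<le> -G" using K pos_le_divide_eq[of "2*K" t "-G"] by linarith
    thus ?thesis by (simp add: mult_ac)
  qed
  have "0 \<le> t*G + t^2*K" using H[rule_format, of "t"] tu t0 u by simp
  moreover have "t*G + t^2*K = t*(t*K + G)" by (simp add: power2_eq_square algebra_simps)
  moreover have "t*(t*K + G) < 0" using t0 tK G by (simp add: mult_pos_neg)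
  ultimately show False by simp
qed

lemma dev:
  assumes n: "n \<in> {1..N}" and ln: "snd (l n) = E n - fst (l n)"
    and lh: "snd (lhat n) = E n - fst (lhat n)"
  shows "f_alpha \<alpha> N E lhat (l(n:=(t, E n - t))) n - f_alpha \<alpha> N E lhat l n
     = (t - fst (l n)) * (2*(1-\<alpha>)*(E n / totE N E)*(totP N l - totO N l) + 4*\<alpha>*(fst (l n) - fst (lhat n)))
       + (t - fst (l n))^2 * (2*(1-\<alpha>)*(E n / totE N E) + 2*\<alpha>)"
  apply (simp only: f_alpha_def bill_DP_def util_def totP_upd[OF n] totO_upd[OF n] fun_upd_same fst_conv snd_conv ln lh)
  apply algebra
  done

lemma mono_helper:
  fixes a b V E D :: real
  assumes "0 \<le> a" "a < b" "b \<le> 1" "E > 0" "0 \<le> D" "D \<le> E" "0 < V" "V \<le> 1"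
  shows "(1-b)*(E^2/2 + D^2/2*(b^2 + V*(1-b)*b)) < (1-a)*(E^2/2 + D^2/2*(a^2+V*(1-a)*a))"
proof -
  define Q where "Q = V + (1-2*V)*(a+b) + (V-1)*(a^2+a*b+b^2)"
  have id: "(1-a)*(E^2/2 + D^2/2*(a^2+V*(1-a)*a)) - (1-b)*(E^2/2 + D^2/2*(b^2 + V*(1-b)*b))
       = (b-a)*(E^2 - D^2*Q)/2" unfolding Q_def by (simp add: field_simps, algebra)
  have r: "1 - a - b + (a^2+a*b+b^2) = (1-a)*(1-b) + a^2 + b^2" by (simp add: power2_eq_square algebra_simps)
  have r0: "0 \<le> (1-a)*(1-b) + a^2 + b^2" using assms by simp
  have "Q - 1 = (V-1)*(1 - a - b + (a^2+a*b+b^2)) - V*(a+b)" unfolding Q_def by (simp add: algebra_simps)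
  moreover have "(V-1)*(1 - a - b + (a^2+a*b+b^2)) \<le> 0"
  proof -
    have "1 - a - b + (a^2+a*b+b^2) \<ge> 0" using r r0 by linarith
    thus ?thesis using assms by (simp add: mult_nonpos_nonneg)
  qed
  moreover have "V*(a+b) > 0" using assms by simp
  ultimately have Q1: "Q < 1" by linarith
  have DE: "D^2 \<le> E^2" using assms by (simp add: power_mono)
  have "E^2 - D^2*Q > 0"
  proof (cases "D = 0")
    case True thus ?thesis using assms by simp
  next
    case False
    hence "D^2 > 0" by simp
    hence "D^2*Q < D^2" using Q1 by simp
    thus ?thesis using DE by linarith
  qed
  hence "(b-a)*(E^2 - D^2*Q)/2 > 0" using assms by simp
  thus ?thesis using id by linarith
qed


lemma NE_props:
  assumes ne: "nash_DP a N E lhat l" and a: "0 \<le> a" "a \<le> 1" and n: "n \<in> {1..N}"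
    and En: "E n > 0" and EE: "totE N E > 0" and lh: "snd (lhat n) = E n - fst (lhat n)"
  shows "(fst (l n) > 0 \<longrightarrow> 2*(1-a)*(E n / totE N E)*(totP N l - totO N l) + 4*a*(fst (l n) - fst (lhat n)) \<le> 0)
       \<and> (fst (l n) < E n \<longrightarrow> 2*(1-a)*(E n / totE N E)*(totP N l - totO N l) + 4*a*(fst (l n) - fst (lhat n)) \<ge> 0)"
proof -
  define G where "G = 2*(1-a)*(E n / totE N E)*(totP N l - totO N l) + 4*a*(fst (l n) - fst (lhat n))"
  define K where "K = 2*(1-a)*(E n / totE N E) + 2*a"
  have feas: "l n \<in> feasible E n" using ne n unfolding nash_DP_def by blast
  hence ln: "snd (l n) = E n - fst (l n)" "fst (l n) \<ge> 0" "fst (l n) \<le> E n"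
    unfolding feasible_def by auto
  have w: "E n / totE N E > 0" using En EE by simp
  have K: "K > 0"
  proof (cases "a = 1")
    case True thus ?thesis by (simp add: K_def)
  next
    case False
    hence "(1-a)*(E n / totE N E) > 0" by (intro mult_pos_pos) (use a w False in auto)
    moreover have "K = 2*((1-a)*(E n / totE N E)) + 2*a" by (simp add: K_def)
    ultimately show ?thesis using a by linarith
  qed
  have H: "\<forall>h. 0 \<le> fst (l n)+h \<and> fst (l n)+h \<le> E n \<longrightarrow> 0 \<le> h*G + h^2*K"
  proof (intro allI impI)
    fix h assume h: "0 \<le> fst (l n)+h \<and> fst (l n)+h \<le> E n"
    define t where "t = fst (l n) + h"
    have "(t, E n - t) \<in> feasible E n" using h unfolding feasible_def t_def by auto
    hence "f_alpha a N E lhat l n \<le> f_alpha a N E lhat (l(n := (t, E n - t))) n"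
      using ne n unfolding nash_DP_def by blast
    moreover have "f_alpha a N E lhat (l(n:=(t, E n - t))) n - f_alpha a N E lhat l n = h*G + h^2*K"
      using dev[where n=n and N=N and l=l and E=E and lhat=lhat and ?\<alpha>=a and t=t, OF n ln(1) lh] unfolding G_def K_def t_def by simp
    ultimately show "0 \<le> h*G + h^2*K" by linarith
  qed
  show ?thesis
    using negG[OF K _ ln(3) H] posG[OF K ln(2) _ H] unfolding G_def by blast
qed

theorem theorem5:
  fixes N :: nat and E :: "nat \<Rightarrow> real" and lhat :: "nat \<Rightarrow> real \<times> real"
  assumes N: "N \<ge> 1"
    and Epos: "\<forall>n\<in>{1..N}. E n > 0"
    and lhat_nonneg: "\<forall>n\<in>{1..N}. fst (lhat n) \<ge> 0 \<and> snd (lhat n) \<ge> 0"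
    and lhat_sum: "\<forall>n\<in>{1..N}. fst (lhat n) + snd (lhat n) = E n"
    and peak: "totP N lhat \<ge> totE N E / 2" "totE N E / 2 \<ge> totO N lhat"
    and cond: "\<forall>n\<in>{1..N}. fst (lhat n) / E n + 1/2 \<ge> totP N lhat / totE N E"
  shows "(\<forall>\<alpha>\<in>{0..1}. \<exists>l. nash_DP \<alpha> N E lhat l)
    \<and> (\<forall>\<alpha>\<in>{0..1}. \<forall>l. nash_DP \<alpha> N E lhat l \<longrightarrow>
          SC_DP \<alpha> N E lhat l =
            (1 - \<alpha>) * ((totE N E)^2 / 2
              + (totP N lhat - totO N lhat)^2 / 2
                * (\<alpha>^2 + ((\<Sum>n\<in>{1..N}. (E n)^2) / (totE N E)^2) * (1 - \<alpha>) * \<alpha>)))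
    \<and> (\<forall>\<alpha>\<in>{0..1}. \<forall>\<beta>\<in>{0..1}. \<forall>l l'. \<alpha> < \<beta> \<longrightarrow>
          nash_DP \<alpha> N E lhat l \<longrightarrow> nash_DP \<beta> N E lhat l' \<longrightarrow>
          SC_DP \<beta> N E lhat l' < SC_DP \<alpha> N E lhat l)"
proof -
  define EE where "EE = totE N E"
  define Pl where "Pl = totP N lhat"
  define Ol where "Ol = totO N lhat"
  define D where "D = Pl - Ol"
  define S2 where "S2 = (\<Sum>n\<in>{1..N}. (E n)^2)"
  define c where "c a = (1-a)*D/(2*EE)" for a :: real
  define y where "y a n = fst (lhat n) - E n * c a" for a :: real and n :: nat
  define T where "T a = a*Pl + (1-a)*EE/2" for a :: real
  have ne: "{1..N} \<noteq> {}" using N by simp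
  have EEpos: "EE > 0" unfolding EE_def totE_def
    by (rule sum_pos) (use N Epos in auto)
  have PlOl: "Pl + Ol = EE" unfolding Pl_def Ol_def EE_def totP_def totO_def totE_def
    using lhat_sum by (simp add: sum.distrib[symmetric])
  have Pl0: "Pl \<ge> 0" unfolding Pl_def totP_def by (intro sum_nonneg) (use lhat_nonneg in auto)
  have Ol0: "Ol \<ge> 0" unfolding Ol_def totO_def by (intro sum_nonneg) (use lhat_nonneg in auto)
  have D0: "D \<ge> 0" using peak unfolding D_def Pl_def Ol_def EE_def by linarith
  have DE: "D \<le> EE" using PlOl Ol0 Pl0 unfolding D_def by linarith
  have sq: "\<forall>n\<in>{1..N}. (E n)^2 > 0" using Epos by force
  have S2pos: "S2 > 0" unfolding S2_def by (rule sum_pos) (use N sq in auto)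
  have S2le: "S2 \<le> EE^2"
  proof -
    have "S2 \<le> (\<Sum>n\<in>{1..N}. E n * EE)" unfolding S2_def
    proof (rule sum_mono)
      fix n assume n: "n \<in> {1..N}"
      have "E n \<le> EE" unfolding EE_def totE_def
        by (rule member_le_sum) (use n Epos in \<open>auto intro: less_imp_le\<close>)
      thus "(E n)^2 \<le> E n * EE" using Epos n by (simp add: power2_eq_square)
    qed
    also have "\<dots> = EE^2" by (simp add: sum_distrib_right[symmetric] EE_def totE_def power2_eq_square)
    finally show ?thesis .
  qed
  have Dhalf: "D/(2*EE) = Pl/EE - 1/2" using PlOl EEpos unfolding D_def by (simp add: field_simps)
  have condn: "fst (lhat n) \<ge> E n * (D/(2*EE))" if n: "n \<in> {1..N}" for n
  proof -
    have En: "E n > 0" using Epos n by simp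
    have "fst (lhat n)/E n \<ge> Pl/EE - 1/2" using cond n unfolding Pl_def EE_def by force
    hence "E n * (Pl/EE - 1/2) \<le> E n * (fst (lhat n)/E n)"
      by (rule mult_left_mono) (use En in simp)
    moreover have "E n * (fst (lhat n)/E n) = fst (lhat n)" using En by simp
    ultimately show ?thesis using Dhalf by simp
  qed
  have lhn: "snd (lhat n) = E n - fst (lhat n)" "fst (lhat n) \<le> E n" "E n > 0" if n: "n \<in> {1..N}" for n
    using lhat_sum lhat_nonneg Epos n by force+
  have c0: "c a \<ge> 0" "c a \<le> D/(2*EE)" if a: "0 \<le> a" "a \<le> 1" for a
  proof -
    have q: "D/(2*EE) \<ge> 0" using D0 EEpos by simp
    have e: "c a = D/(2*EE) - a*(D/(2*EE))" unfolding c_def using EEpos by (simp add: field_simps)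
    have "a*(D/(2*EE)) \<ge> 0" by (rule mult_nonneg_nonneg[OF a(1) q])
    moreover have "a*(D/(2*EE)) \<le> D/(2*EE)" using q a by (rule mult_left_le_one_le)
    ultimately show "c a \<ge> 0" "c a \<le> D/(2*EE)" using e by linarith+
  qed
  have ybnd: "0 \<le> y a n" "y a n \<le> fst (lhat n)" "y a n \<le> E n"
    if a: "0 \<le> a" "a \<le> 1" and n: "n \<in> {1..N}" for a n
  proof -
    have En: "E n > 0" using lhn(3)[OF n] .
    have "E n * c a \<le> E n * (D/(2*EE))" by (rule mult_left_mono) (use c0[OF a] En in auto)
    thus "0 \<le> y a n" using condn[OF n] unfolding y_def by linarith
    show "y a n \<le> fst (lhat n)" using c0[OF a] En unfolding y_def by simp
    thus "y a n \<le> E n" using lhn(2)[OF n] by linarith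
  qed
  have ysum: "(\<Sum>n\<in>{1..N}. y a n) = T a" for a
  proof -
    have "(\<Sum>n\<in>{1..N}. y a n) = Pl - EE * c a"
      unfolding y_def Pl_def EE_def totP_def totE_def by (simp add: sum_subtractf sum_distrib_right)
    also have "\<dots> = T a"
    proof -
      have Ol': "Ol = EE - Pl" using PlOl by simp
      show ?thesis unfolding c_def T_def D_def Ol' using EEpos by (simp add: field_simps)
    qed
    finally show ?thesis .
  qed
  have Tz: "2 * T a - EE - a*D = 0" for a
  proof -
    have "2 * T a - EE - a*D = a*(Pl+Ol-EE)" unfolding T_def D_def by (simp add: field_simps)
    thus ?thesis using PlOl by simp
  qed
  have Gid: "2*(1-a)*(E n / EE)*(P - Qo) + 4*a*(x - fst (lhat n))
      = 4*a*(x - y a n) + 2*(1-a)*(E n / EE)*(2*P - EE - a*D)" if "Qo = EE - P" for a n P Qo x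
    unfolding y_def c_def that using EEpos by (simp add: field_simps)
  have char: "totP N l = T a \<and> (\<forall>n\<in>{1..N}. a * fst (l n) = a * y a n)"
    if a: "0 \<le> a" "a \<le> 1" and nl: "nash_DP a N E lhat l" for a l
  proof -
    define P where "P = totP N l"
    have feas: "\<forall>n\<in>{1..N}. fst (l n) + snd (l n) = E n \<and> fst (l n) \<ge> 0 \<and> snd (l n) \<ge> 0"
      using nl unfolding nash_DP_def feasible_def by auto
    have Oeq: "totO N l = EE - P" unfolding P_def EE_def totO_def totP_def totE_def
      using feas by (simp add: sum.distrib[symmetric] algebra_simps)
    define Z where "Z = 2*P - EE - a*D"
    have G: "(fst (l n) > 0 \<longrightarrow> 4*a*(fst (l n) - y a n) + 2*(1-a)*(E n / EE)*Z \<le> 0)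
       \<and> (fst (l n) < E n \<longrightarrow> 4*a*(fst (l n) - y a n) + 2*(1-a)*(E n / EE)*Z \<ge> 0)"
      if n: "n \<in> {1..N}" for n
      using NE_props[OF nl a n lhn(3)[OF n] EEpos[unfolded EE_def] lhn(1)[OF n]]
        Gid[OF Oeq, of a n "fst (l n)"] unfolding Z_def EE_def P_def by simp
    have xb: "fst (l n) \<ge> 0" "fst (l n) \<le> E n" if n: "n \<in> {1..N}" for n
      using feas n by force+
    have wpos: "E n / EE > 0" if n: "n \<in> {1..N}" for n using lhn(3)[OF n] EEpos by simp
    have PT: "P = T a"
    proof (rule ccontr)
      assume "P \<noteq> T a"
      hence "P > T a \<or> P < T a" by linarith
      thus False
      proof
        assume PT: "P > T a"
        hence Z: "Z > 0" using Tz[of a] unfolding Z_def by linarith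
        have "\<forall>n\<in>{1..N}. fst (l n) \<le> y a n"
        proof
          fix n assume n: "n \<in> {1..N}"
          show "fst (l n) \<le> y a n"
          proof (cases "fst (l n) > 0")
            case False thus ?thesis using xb[OF n] ybnd[OF a n] by linarith
          next
            case True
            hence Gn: "4*a*(fst (l n) - y a n) + 2*(1-a)*(E n / EE)*Z \<le> 0" using G[OF n] by blast
            have nn: "(1-a)*(E n / EE)*Z \<ge> 0" by (intro mult_nonneg_nonneg) (use a wpos[OF n] Z in auto)
            show ?thesis
            proof (cases "a = 0")
              case True
              have "(E n / EE)*Z > 0" using wpos[OF n] Z by (rule mult_pos_pos)
              thus ?thesis using Gn True by simp
            next
              case False
              hence "a > 0" using a by simp
              moreover have "a*(fst (l n) - y a n) \<le> 0" using Gn nn by linarith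
              ultimately show ?thesis by (simp add: mult_le_0_iff)
            qed
          qed
        qed
        hence "P \<le> (\<Sum>n\<in>{1..N}. y a n)" unfolding P_def totP_def by (intro sum_mono) blast
        thus False using PT ysum[of a] by linarith
      next
        assume PT: "P < T a"
        hence Z: "Z < 0" using Tz[of a] unfolding Z_def by linarith
        have "\<forall>n\<in>{1..N}. fst (l n) \<ge> y a n"
        proof
          fix n assume n: "n \<in> {1..N}"
          show "fst (l n) \<ge> y a n"
          proof (cases "fst (l n) < E n")
            case False thus ?thesis using xb[OF n] ybnd[OF a n] by linarith
          next
            case True
            hence Gn: "4*a*(fst (l n) - y a n) + 2*(1-a)*(E n / EE)*Z \<ge> 0" using G[OF n] by blast
            have nn: "(1-a)*(E n / EE)*(-Z) \<ge> 0" by (intro mult_nonneg_nonneg) (use a wpos[OF n] Z in auto)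
            show ?thesis
            proof (cases "a = 0")
              case True
              have "(E n / EE)*Z < 0" using wpos[OF n] Z by (rule mult_pos_neg)
              thus ?thesis using Gn True by simp
            next
              case False
              hence "a > 0" using a by simp
              moreover have "a*(fst (l n) - y a n) \<ge> 0"
              proof -
                have "(1-a)*(E n / EE)*(-Z) = -((1-a)*(E n / EE)*Z)" by simp
                moreover have "4*a*(fst (l n) - y a n) = 4*(a*(fst (l n) - y a n))" by simp
                ultimately show ?thesis using Gn nn by linarith
              qed
              ultimately show ?thesis by (simp add: zero_le_mult_iff)
            qed
          qed
        qed
        hence "(\<Sum>n\<in>{1..N}. y a n) \<le> P" unfolding P_def totP_def by (intro sum_mono) blast
        thus False using PT ysum[of a] by linarith
      qed
    qed
    have Z0: "Z = 0" using Tz[of a] PT unfolding Z_def by linarith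
    have "\<forall>n\<in>{1..N}. a * fst (l n) = a * y a n"
    proof
      fix n assume n: "n \<in> {1..N}"
      have le: "a * (fst (l n) - y a n) \<le> 0"
      proof (cases "fst (l n) > 0")
        case True thus ?thesis using G[OF n] Z0 by simp
      next
        case False
        hence "fst (l n) = 0" using xb[OF n] by linarith
        thus ?thesis using ybnd[OF a n] a by (simp add: mult_nonneg_nonneg)
      qed
      have ge: "a * (fst (l n) - y a n) \<ge> 0"
      proof (cases "fst (l n) < E n")
        case True thus ?thesis using G[OF n] Z0 by simp
      next
        case False
        hence "fst (l n) = E n" using xb[OF n] by linarith
        thus ?thesis using ybnd[OF a n] a by simp
      qed
      have "a*(fst (l n) - y a n) = a*fst (l n) - a*y a n" by (rule right_diff_distrib)
      thus "a * fst (l n) = a * y a n" using le ge by linarith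
    qed
    thus ?thesis using PT unfolding P_def by blast
  qed
  have SC: "SC_DP a N E lhat l = (1-a)*(EE^2/2 + D^2/2*(a^2 + (S2/EE^2)*(1-a)*a))"
    if a: "0 \<le> a" "a \<le> 1" and nl: "nash_DP a N E lhat l" for a l
  proof -
    define P where "P = totP N l"
    have feas: "\<forall>n\<in>{1..N}. fst (l n) + snd (l n) = E n \<and> fst (l n) \<ge> 0 \<and> snd (l n) \<ge> 0"
      using nl unfolding nash_DP_def feasible_def by auto
    have Oeq: "totO N l = EE - P" unfolding P_def EE_def totO_def totP_def totE_def
      using feas by (simp add: sum.distrib[symmetric] algebra_simps)
    have ch: "P = T a" "\<forall>n\<in>{1..N}. a * fst (l n) = a * y a n" using char[OF a nl] unfolding P_def by auto
    have fn: "f_alpha a N E lhat l n = (1-a)*((P^2 + (EE-P)^2)/EE) * E n + (2*a*(c a)^2) * (E n)^2"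
      if n: "n \<in> {1..N}" for n
    proof -
      have sn: "snd (l n) = E n - fst (l n)" using feas n by force
      have "f_alpha a N E lhat l n = (1-a)*((P^2 + (EE-P)^2)/EE) * E n + 2*(a*(fst (l n) - fst (lhat n))^2)"
        unfolding f_alpha_def bill_DP_def util_def Oeq[unfolded P_def] sn lhn(1)[OF n]
        unfolding P_def EE_def by algebra
      also have "a*(fst (l n) - fst (lhat n))^2 = a*(E n * c a)^2"
      proof (cases "a = 0")
        case True thus ?thesis by simp
      next
        case False
        hence "fst (l n) = y a n" using ch(2) n by simp
        thus ?thesis unfolding y_def by (simp add: power2_eq_square)
      qed
      finally show ?thesis by (simp add: power2_eq_square algebra_simps)
    qed
    have "SC_DP a N E lhat l = (\<Sum>n\<in>{1..N}. (1-a)*((P^2 + (EE-P)^2)/EE) * E n + (2*a*(c a)^2) * (E n)^2)"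
      unfolding SC_DP_def using fn by (rule sum.cong[OF refl])
    also have "\<dots> = (1-a)*((P^2 + (EE-P)^2)/EE) * EE + (2*a*(c a)^2) * S2"
    proof -
      have "(\<Sum>n\<in>{1..N}. (1-a)*((P^2 + (EE-P)^2)/EE) * E n + (2*a*(c a)^2) * (E n)^2)
          = (1-a)*((P^2 + (EE-P)^2)/EE) * (\<Sum>n\<in>{1..N}. E n) + (2*a*(c a)^2) * (\<Sum>n\<in>{1..N}. (E n)^2)"
        by (simp only: sum.distrib sum_distrib_left)
      thus ?thesis unfolding S2_def EE_def totE_def .
    qed
    also have "\<dots> = (1-a)*(EE^2/2 + D^2/2*(a^2 + (S2/EE^2)*(1-a)*a))"
    proof -
      have Pl': "Pl = (EE + D)/2" using PlOl unfolding D_def by simp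
      show ?thesis unfolding ch(1) T_def c_def Pl' using EEpos
        by (simp add: field_simps power2_eq_square)
    qed
    finally show ?thesis .
  qed
  have part1: "\<forall>a\<in>{0..1}. \<exists>l. nash_DP a N E lhat l"
  proof
    fix a :: real assume "a \<in> {0..1}"
    hence a: "0 \<le> a" "a \<le> 1" by auto
    define l where "l n = (y a n, E n - y a n)" for n
    have feasl: "\<forall>n\<in>{1..N}. l n \<in> feasible E n"
      unfolding l_def feasible_def using ybnd[OF a] by auto
    have Pl: "totP N l = T a" unfolding totP_def l_def using ysum by simp
    have Ol: "totO N l = EE - totP N l" unfolding totO_def totP_def l_def EE_def totE_def
      by (simp add: sum_subtractf)
    have "\<forall>n\<in>{1..N}. \<forall>x\<in>feasible E n. f_alpha a N E lhat l n \<le> f_alpha a N E lhat (l(n := x)) n"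
    proof (intro ballI)
      fix n x assume n: "n \<in> {1..N}" and x: "x \<in> feasible E n"
      obtain t s where xs: "x = (t, s)" by (cases x)
      hence s: "s = E n - t" using x unfolding feasible_def by auto
      have ln: "snd (l n) = E n - fst (l n)" unfolding l_def by simp
      have K: "0 \<le> 2*(1-a)*(E n / totE N E) + 2*a" using a lhn(3)[OF n] EEpos unfolding EE_def by simp
      have G0: "2*(1-a)*(E n / totE N E)*(totP N l - totO N l) + 4*a*(fst (l n) - fst (lhat n)) = 0"
        using Gid[OF Ol, of a n "fst (l n)"] Tz[of a] Pl unfolding l_def EE_def by simp
      have "f_alpha a N E lhat (l(n := x)) n - f_alpha a N E lhat l n
          = (t - fst (l n))^2 * (2*(1-a)*(E n / totE N E) + 2*a)"
        using dev[where n=n and N=N and l=l and E=E and lhat=lhat and ?\<alpha>=a and t=t, OF n ln lhn(1)[OF n]] G0 unfolding xs s by simp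
      moreover have "(t - fst (l n))^2 * (2*(1-a)*(E n / totE N E) + 2*a) \<ge> 0" using K by simp
      ultimately show "f_alpha a N E lhat l n \<le> f_alpha a N E lhat (l(n := x)) n" by linarith
    qed
    thus "\<exists>l. nash_DP a N E lhat l" using feasl unfolding nash_DP_def by blast
  qed
  have part2: "\<forall>a\<in>{0..1}. \<forall>l. nash_DP a N E lhat l \<longrightarrow>
          SC_DP a N E lhat l = (1 - a) * ((totE N E)^2 / 2 + (totP N lhat - totO N lhat)^2 / 2
                * (a^2 + ((\<Sum>n\<in>{1..N}. (E n)^2) / (totE N E)^2) * (1 - a) * a))"
    using SC unfolding EE_def D_def Pl_def Ol_def S2_def by auto
  have part3: "\<forall>a\<in>{0..1}. \<forall>b\<in>{0..1}. \<forall>l l'. a < b \<longrightarrow>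
          nash_DP a N E lhat l \<longrightarrow> nash_DP b N E lhat l' \<longrightarrow>
          SC_DP b N E lhat l' < SC_DP a N E lhat l"
  proof (intro ballI allI impI)
    fix a b :: real and l l'
    assume a: "a \<in> {0..1}" and b: "b \<in> {0..1}" and ab: "a < b"
      and nl: "nash_DP a N E lhat l" and nl': "nash_DP b N E lhat l'"
    have V: "0 < S2/EE^2" "S2/EE^2 \<le> 1" using S2pos S2le EEpos by auto
    show "SC_DP b N E lhat l' < SC_DP a N E lhat l"
      using SC[OF _ _ nl] SC[OF _ _ nl'] a b mono_helper[OF _ ab _ EEpos D0 DE V] by auto
  qed
  show ?thesis using part1 part2 part3 by blast
qed

end
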